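(* Let $G=(V,E,\gamma,c)$ be a typed DAG task executed on a platform with $M_s\ge 1$ cores of each type $s\in S$ under a work-conserving scheduling algorithm. Let $\pi=(\tau_1,\dots,\tau_k)$ be a critical path of an arbitrary execution sequence of $G$, with finish times $f(\cdot)$. Set $f(\tau_0):=0$, and for $1\le i\le k$ let $I_i=f(\tau_i)-f(\tau_{i-1})$, let $x_i$ be the total length of the time within $[f(\tau_{i-1}),f(\tau_i))$ during which $\tau_i$ is executing, and let $y_i=I_i-x_i$ be the total length of the time within that interval during which $\tau_i$ is not executing. For $s\in S$ let $\mathcal{X}_s=\sum_{i:\gamma(\tau_i)=s}x_i$ and $\mathcal{Y}_s=\sum_{i:\gamma(\tau_i)=s}y_i$. Then for every $s\in S$: \[ \mathcal{X}_s\le \sum_{j:\,\gamma(\tau_j)=s} c(\tau_j),\qquad \mathcal{Y}_s\le \frac{1}{M_s}\Big(vol_s(G)-\sum_{j:\,\gamma(\tau_j)=s} c(\tau_j)\Big). \]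
   Context: A typed DAG task is $G=(V,E,\gamma,c)$ where $(V,E)$ is a finite directed acyclic graph with a unique source vertex $v_{src}$ (no predecessors) and a unique sink vertex $v_{snk}$ (no successors), $S$ is a finite set of core types, $\gamma:V\to S$ gives the type of each vertex, and $c:V\to\mathbb{R}_{\ge 0}$ gives the worst-case execution time (WCET) of each vertex. The platform has, for each $s\in S$, $M_s\ge1$ cores of type $s$. For $u\in V$, $\mathrm{pre}(u)$ denotes its set of (immediate) predecessors. A complete path is a path of $G$ from $v_{src}$ to $v_{snk}$. $vol_s(G)=\sum_{u\in V,\gamma(u)=s}c(u)$. Runtime model: a vertex becomes eligible when all its predecessors have finished (the source is eligible at time $0$); a vertex $v$ may only execute on cores of type $\gamma(v)$, one core at a time, for a total execution time of at most $c(v)$ (possibly less), and it finishes when its execution is complete. Scheduling is work-conserving: an eligible unfinished vertex of type $s$ must be executing whenever some core of type $s$ is available (i.e., if such a vertex is not executing, all $M_s$ cores of type $s$ are busy). An execution sequence is any resulting trace of which vertex executes when; $f(v)$ denotes the finish time of $v$ in it. A critical path of an execution sequence is a complete path $\pi=(\tau_1,\dots,\tau_k)$ such that for every $2\le i\le k$, $f(\tau_{i-1})=\max_{u\in\mathrm{pre}(\tau_i)}f(u)$. *)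

theory Defs
  imports "HOL-Analysis.Analysis"
begin

definition pre :: "('v \<times> 'v) set \<Rightarrow> 'v \<Rightarrow> 'v set" where
  "pre E u = {w. (w, u) \<in> E}"

definition succ :: "('v \<times> 'v) set \<Rightarrow> 'v \<Rightarrow> 'v set" where
  "succ E u = {w. (u, w) \<in> E}"

definition typed_dag_task ::
  "'v set \<Rightarrow> ('v \<times> 'v) set \<Rightarrow> 's set \<Rightarrow> ('v \<Rightarrow> 's) \<Rightarrow> ('v \<Rightarrow> real) \<Rightarrow> 'v \<Rightarrow> 'v \<Rightarrow> bool" where
  "typed_dag_task V E S \<gamma> c src snk \<longleftrightarrow>
     finite V \<and> E \<subseteq> V \<times> V \<and> acyclic E \<and> finite S \<and>
     (\<forall>v\<in>V. \<gamma> v \<in> S) \<and> (\<forall>v\<in>V. 0 \<le> c v) \<and>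
     src \<in> V \<and> pre E src = {} \<and> (\<forall>v\<in>V. pre E v = {} \<longrightarrow> v = src) \<and>
     snk \<in> V \<and> succ E snk = {} \<and> (\<forall>v\<in>V. succ E v = {} \<longrightarrow> v = snk)"

definition vol :: "'v set \<Rightarrow> ('v \<Rightarrow> 's) \<Rightarrow> ('v \<Rightarrow> real) \<Rightarrow> 's \<Rightarrow> real" where
  "vol V \<gamma> c s = (\<Sum>u\<in>{u\<in>V. \<gamma> u = s}. c u)"

text \<open>A schedule: sched t s j = Some v means that at time t core number j (j < M s)
  of type s executes vertex v; None means that core is idle.\<close>
definition executing :: "(real \<Rightarrow> 's \<Rightarrow> nat \<Rightarrow> 'v option) \<Rightarrow> 'v \<Rightarrow> real \<Rightarrow> bool" where
  "executing sched v t \<longleftrightarrow> (\<exists>s j. sched t s j = Some v)"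

definition exec_set :: "(real \<Rightarrow> 's \<Rightarrow> nat \<Rightarrow> 'v option) \<Rightarrow> 'v \<Rightarrow> real set" where
  "exec_set sched v = {t. executing sched v t}"

definition release :: "('v \<times> 'v) set \<Rightarrow> ('v \<Rightarrow> real) \<Rightarrow> 'v \<Rightarrow> real" where
  "release E f v = (if pre E v = {} then 0 else Max (f ` pre E v))"

definition exec_seq ::
  "'v set \<Rightarrow> ('v \<times> 'v) set \<Rightarrow> ('v \<Rightarrow> 's) \<Rightarrow> ('v \<Rightarrow> real) \<Rightarrow> ('s \<Rightarrow> nat)
   \<Rightarrow> (real \<Rightarrow> 's \<Rightarrow> nat \<Rightarrow> 'v option) \<Rightarrow> ('v \<Rightarrow> real) \<Rightarrow> bool" where
  "exec_seq V E \<gamma> c M sched f \<longleftrightarrow>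
     \<comment> \<open>a vertex only runs on an existing core of its own type\<close>
     (\<forall>t s j v. sched t s j = Some v \<longrightarrow> v \<in> V \<and> \<gamma> v = s \<and> j < M s) \<and>
     \<comment> \<open>one core at a time\<close>
     (\<forall>t s j j' v. sched t s j = Some v \<and> sched t s j' = Some v \<longrightarrow> j = j') \<and>
     \<comment> \<open>executes only while eligible and unfinished\<close>
     (\<forall>v\<in>V. release E f v \<le> f v) \<and>
     (\<forall>v\<in>V. exec_set sched v \<subseteq> {release E f v ..< f v}) \<and>
     (\<forall>v\<in>V. exec_set sched v \<in> sets lborel) \<and>
     \<comment> \<open>total execution time at most the WCET\<close>
     (\<forall>v\<in>V. measure lborel (exec_set sched v) \<le> c v) \<and>
     \<comment> \<open>it finishes exactly when its execution is complete\<close>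
     (\<forall>v\<in>V. \<forall>t. release E f v \<le> t \<and> t < f v \<longrightarrow>
         measure lborel (exec_set sched v \<inter> {..t}) < measure lborel (exec_set sched v)) \<and>
     \<comment> \<open>work-conserving\<close>
     (\<forall>v\<in>V. \<forall>t. release E f v \<le> t \<and> t < f v \<and> \<not> executing sched v t \<longrightarrow>
         (\<forall>j < M (\<gamma> v). sched t (\<gamma> v) j \<noteq> None))"

definition complete_path :: "('v \<times> 'v) set \<Rightarrow> 'v \<Rightarrow> 'v \<Rightarrow> 'v list \<Rightarrow> bool" where
  "complete_path E src snk \<pi> \<longleftrightarrow> \<pi> \<noteq> [] \<and> hd \<pi> = src \<and> last \<pi> = snk \<and>
     (\<forall>i. Suc i < length \<pi> \<longrightarrow> (\<pi> ! i, \<pi> ! Suc i) \<in> E)"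

definition critical_path ::
  "('v \<times> 'v) set \<Rightarrow> 'v \<Rightarrow> 'v \<Rightarrow> ('v \<Rightarrow> real) \<Rightarrow> 'v list \<Rightarrow> bool" where
  "critical_path E src snk f \<pi> \<longleftrightarrow> complete_path E src snk \<pi> \<and>
     (\<forall>i. 0 < i \<and> i < length \<pi> \<longrightarrow> f (\<pi> ! (i - 1)) = Max (f ` pre E (\<pi> ! i)))"

text \<open>Paper indices 1..k correspond to list indices 0..k-1; f(tau_0) := 0.\<close>
definition prev_finish :: "('v \<Rightarrow> real) \<Rightarrow> 'v list \<Rightarrow> nat \<Rightarrow> real" where
  "prev_finish f \<pi> i = (if i = 0 then 0 else f (\<pi> ! (i - 1)))"

definition path_x :: "(real \<Rightarrow> 's \<Rightarrow> nat \<Rightarrow> 'v option) \<Rightarrow> ('v \<Rightarrow> real) \<Rightarrow> 'v list \<Rightarrow> nat \<Rightarrow> real" where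
  "path_x sched f \<pi> i =
     measure lborel (exec_set sched (\<pi> ! i) \<inter> {prev_finish f \<pi> i ..< f (\<pi> ! i)})"

definition path_y :: "(real \<Rightarrow> 's \<Rightarrow> nat \<Rightarrow> 'v option) \<Rightarrow> ('v \<Rightarrow> real) \<Rightarrow> 'v list \<Rightarrow> nat \<Rightarrow> real" where
  "path_y sched f \<pi> i = (f (\<pi> ! i) - prev_finish f \<pi> i) - path_x sched f \<pi> i"

end

theory Submission
  imports Defs
begin

lemma path_trancl:
  assumes "\<forall>i. Suc i < length \<pi> \<longrightarrow> (\<pi> ! i, \<pi> ! Suc i) \<in> E"
  shows "i < j \<Longrightarrow> j < length \<pi> \<Longrightarrow> (\<pi> ! i, \<pi> ! j) \<in> E\<^sup>+"
proof (induction j)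
  case 0 then show ?case by simp
next
  case (Suc j)
  have e: "(\<pi> ! j, \<pi> ! Suc j) \<in> E" using assms Suc.prems by auto
  show ?case
  proof (cases "i = j")
    case True then show ?thesis using e by auto
  next
    case False
    then have "(\<pi> ! i, \<pi> ! j) \<in> E\<^sup>+" using Suc by auto
    then show ?thesis using e by (meson trancl.trancl_into_trancl)
  qed
qed

lemma path_distinct:
  assumes "\<forall>i. Suc i < length \<pi> \<longrightarrow> (\<pi> ! i, \<pi> ! Suc i) \<in> E" "acyclic E"
  shows "distinct \<pi>"
  unfolding distinct_conv_nth
proof (intro allI impI)
  fix i j assume h: "i < length \<pi>" "j < length \<pi>" "i \<noteq> j"
  show "\<pi> ! i \<noteq> \<pi> ! j"
  proof
    assume eq: "\<pi> ! i = \<pi> ! j"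
    show False
    proof (cases "i < j")
      case True
      then have "(\<pi> ! i, \<pi> ! j) \<in> E\<^sup>+" using path_trancl[OF assms(1)] h by auto
      then show False using eq assms(2) by (simp add: acyclic_def)
    next
      case False
      then have "(\<pi> ! j, \<pi> ! i) \<in> E\<^sup>+" using path_trancl[OF assms(1)] h by auto
      then show False using eq assms(2) by (simp add: acyclic_def)
    qed
  qed
qed

theorem lemma1:
  fixes V :: "'v set" and E :: "('v \<times> 'v) set" and S :: "'s set"
    and \<gamma> :: "'v \<Rightarrow> 's" and c :: "'v \<Rightarrow> real" and src snk :: 'v
    and M :: "'s \<Rightarrow> nat" and sched :: "real \<Rightarrow> 's \<Rightarrow> nat \<Rightarrow> 'v option"
    and f :: "'v \<Rightarrow> real" and \<pi> :: "'v list"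
  assumes "typed_dag_task V E S \<gamma> c src snk"
    and "\<forall>s\<in>S. 1 \<le> M s"
    and "exec_seq V E \<gamma> c M sched f"
    and "critical_path E src snk f \<pi>"
  shows "\<forall>s\<in>S.
     (\<Sum>i | i < length \<pi> \<and> \<gamma> (\<pi> ! i) = s. path_x sched f \<pi> i)
        \<le> (\<Sum>j | j < length \<pi> \<and> \<gamma> (\<pi> ! j) = s. c (\<pi> ! j)) \<and>
     (\<Sum>i | i < length \<pi> \<and> \<gamma> (\<pi> ! i) = s. path_y sched f \<pi> i)
        \<le> (vol V \<gamma> c s - (\<Sum>j | j < length \<pi> \<and> \<gamma> (\<pi> ! j) = s. c (\<pi> ! j))) / real (M s)"
proof
  fix s assume sS: "s \<in> S"
  define a where "a i = prev_finish f \<pi> i" for i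
  define X where "X v = exec_set sched v" for v
  define I where "I = {i. i < length \<pi> \<and> \<gamma> (\<pi> ! i) = s}"
  define N where "N = {v \<in> V. \<gamma> v = s \<and> v \<notin> set \<pi>}"
  note T = assms(1)[unfolded typed_dag_task_def]
  note ES = assms(3)[unfolded exec_seq_def]
  note CP = assms(4)[unfolded critical_path_def complete_path_def]
  note C1 = ES[THEN conjunct1]
  note C2 = ES[THEN conjunct2, THEN conjunct1]
  note C3 = ES[THEN conjunct2, THEN conjunct2, THEN conjunct1]
  note C4 = ES[THEN conjunct2, THEN conjunct2, THEN conjunct2, THEN conjunct1]
  note C5 = ES[THEN conjunct2, THEN conjunct2, THEN conjunct2, THEN conjunct2, THEN conjunct1]
  note C6 = ES[THEN conjunct2, THEN conjunct2, THEN conjunct2, THEN conjunct2, THEN conjunct2, THEN conjunct1]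
  note C8 = ES[THEN conjunct2, THEN conjunct2, THEN conjunct2, THEN conjunct2, THEN conjunct2, THEN conjunct2, THEN conjunct2]
  have ES1: "\<And>t s j v. sched t s j = Some v \<Longrightarrow> v \<in> V \<and> \<gamma> v = s \<and> j < M s"
    using C1 by blast
  have ES2: "\<And>t s j j' v. sched t s j = Some v \<Longrightarrow> sched t s j' = Some v \<Longrightarrow> j = j'"
    using C2 by blast
  have ES3: "\<And>v. v \<in> V \<Longrightarrow> release E f v \<le> f v" using C3 by blast
  have ES4: "\<And>v. v \<in> V \<Longrightarrow> exec_set sched v \<subseteq> {release E f v ..< f v}" using C4 by blast
  have ES5: "\<And>v. v \<in> V \<Longrightarrow> exec_set sched v \<in> sets lborel" using C5 by blast
  have ES6: "\<And>v. v \<in> V \<Longrightarrow> measure lborel (exec_set sched v) \<le> c v" using C6 by blast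
  have ES8: "\<And>v t j. v \<in> V \<Longrightarrow> release E f v \<le> t \<Longrightarrow> t < f v \<Longrightarrow> \<not> executing sched v t
      \<Longrightarrow> j < M (\<gamma> v) \<Longrightarrow> sched t (\<gamma> v) j \<noteq> None" using C8 by blast
  have ne: "\<pi> \<noteq> []" using CP by auto
  have edge: "\<And>i. Suc i < length \<pi> \<Longrightarrow> (\<pi> ! i, \<pi> ! Suc i) \<in> E" using CP by auto
  have p0: "\<pi> ! 0 = src" using CP ne by (metis hd_conv_nth)
  have inV: "\<pi> ! i \<in> V" if i: "i < length \<pi>" for i
  proof (cases i)
    case 0 then show ?thesis using p0 T by simp
  next
    case (Suc k) then show ?thesis using edge[of k] i T by auto
  qed
  have rel: "release E f (\<pi> ! i) = a i" if i: "i < length \<pi>" for i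
  proof (cases i)
    case 0 then show ?thesis using p0 T by (simp add: release_def a_def prev_finish_def)
  next
    case (Suc k)
    have "\<pi> ! k \<in> pre E (\<pi> ! i)" using edge[of k] i Suc by (simp add: pre_def)
    then have "pre E (\<pi> ! i) \<noteq> {}" by auto
    moreover have "f (\<pi> ! k) = Max (f ` pre E (\<pi> ! i))" using CP i Suc
      by (metis diff_Suc_1 zero_less_Suc)
    ultimately show ?thesis using Suc by (simp add: release_def a_def prev_finish_def)
  qed
  have aleb: "a i \<le> f (\<pi> ! i)" if i: "i < length \<pi>" for i
    using rel[OF i] ES3[OF inV[OF i]] by simp
  have Xsub: "X (\<pi> ! i) \<subseteq> {a i ..< f (\<pi> ! i)}" if i: "i < length \<pi>" for i
    using rel[OF i] ES4[OF inV[OF i]] unfolding X_def by simp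
  have step: "f (\<pi> ! i) \<le> f (\<pi> ! Suc i)" if i: "Suc i < length \<pi>" for i
    using aleb[OF i] by (simp add: a_def prev_finish_def)
  have mono: "f (\<pi> ! i) \<le> f (\<pi> ! j)" if "i \<le> j" "j < length \<pi>" for i j
    using that
  proof (induction j)
    case 0 then show ?case by simp
  next
    case (Suc j)
    show ?case
    proof (cases "i = Suc j")
      case True then show ?thesis by simp
    next
      case False
      then have "f (\<pi> ! i) \<le> f (\<pi> ! j)" using Suc by auto
      then show ?thesis using step[of j] Suc.prems by linarith
    qed
  qed
  have age: "f (\<pi> ! i) \<le> a k" if "i < k" "k < length \<pi>" for i k
    using mono[of i "k - 1"] that by (simp add: a_def prev_finish_def)
  have Xmeas: "X v \<in> sets lborel" if "v \<in> V" for v using ES5 that unfolding X_def by blast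
  have Xfin: "emeasure lborel (X v) < \<infinity>" if "v \<in> V" for v
  proof -
    have "X v \<subseteq> {release E f v ..< f v}" using ES4 that unfolding X_def by blast
    then have "bounded (X v)" by (rule bounded_subset[rotated]) simp
    then show ?thesis by (rule emeasure_bounded_finite)
  qed
  have finI: "finite I" unfolding I_def by simp
  have finN: "finite N" unfolding N_def using T by simp
  have dist: "distinct \<pi>" using path_distinct[of \<pi> E] CP T by blast
  have px: "path_x sched f \<pi> i = measure lborel (X (\<pi> ! i))" if i: "i < length \<pi>" for i
  proof -
    have "X (\<pi> ! i) \<inter> {prev_finish f \<pi> i ..< f (\<pi> ! i)} = X (\<pi> ! i)"
      using Xsub[OF i] unfolding a_def by blast
    then show ?thesis unfolding path_x_def X_def by simp
  qed
  have partx: "(\<Sum>i\<in>I. path_x sched f \<pi> i) \<le> (\<Sum>i\<in>I. c (\<pi> ! i))"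
  proof (rule sum_mono)
    fix i assume "i \<in> I"
    then have i: "i < length \<pi>" unfolding I_def by simp
    show "path_x sched f \<pi> i \<le> c (\<pi> ! i)" using px[OF i] ES6[OF inV[OF i]] unfolding X_def by simp
  qed
  define B where "B i = {a i ..< f (\<pi> ! i)} - X (\<pi> ! i)" for i
  have Bmeas: "B i \<in> sets lborel" if i: "i < length \<pi>" for i
    unfolding B_def using Xmeas[OF inV[OF i]] by auto
  have Bfin: "emeasure lborel (B i) < \<infinity>" if i: "i < length \<pi>" for i
  proof -
    have "bounded (B i)" unfolding B_def by (rule bounded_subset[of "{a i ..< f (\<pi> ! i)}"]) auto
    then show ?thesis by (rule emeasure_bounded_finite)
  qed
  have py: "path_y sched f \<pi> i = measure lborel (B i)" if i: "i < length \<pi>" for i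
  proof -
    have "measure lborel (B i) = measure lborel {a i ..< f (\<pi> ! i)} - measure lborel (X (\<pi> ! i))"
    proof -
      have "B i = {a i ..< f (\<pi> ! i)} - X (\<pi> ! i)" by (simp add: B_def)
      moreover have "measure lborel ({a i ..< f (\<pi> ! i)} - X (\<pi> ! i)) =
          measure lborel {a i ..< f (\<pi> ! i)} - measure lborel (X (\<pi> ! i))"
        by (rule measure_Diff) (use aleb[OF i] Xsub[OF i] Xmeas[OF inV[OF i]] in auto)
      ultimately show ?thesis by simp
    qed
    also have "\<dots> = (f (\<pi> ! i) - a i) - measure lborel (X (\<pi> ! i))"
      using aleb[OF i] by simp
    finally show ?thesis unfolding path_y_def px[OF i] a_def by simp
  qed
  have Msge: "1 \<le> M s" using assms(2) sS by blast
  have pw: "(\<Sum>i\<in>I. real (M s) * indicator (B i) t) \<le> (\<Sum>v\<in>N. indicator (X v) t :: real)" for t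
  proof (cases "\<exists>i\<in>I. t \<in> B i")
    case False
    then have "(\<Sum>i\<in>I. real (M s) * indicator (B i) t) = 0"
      by (auto intro!: sum.neutral simp: indicator_def)
    moreover have "0 \<le> (\<Sum>v\<in>N. indicator (X v) t :: real)" by (auto intro: sum_nonneg)
    ultimately show ?thesis by simp
  next
    case True
    then obtain i where iI: "i \<in> I" and tB: "t \<in> B i" by auto
    have i: "i < length \<pi>" and gi: "\<gamma> (\<pi> ! i) = s" using iI unfolding I_def by auto
    have tint: "a i \<le> t" "t < f (\<pi> ! i)" and nex: "\<not> executing sched (\<pi> ! i) t"
      using tB unfolding B_def X_def exec_set_def by auto
    have disj: "t \<notin> B k" if "k \<in> I" "k \<noteq> i" for k
    proof
      assume tk: "t \<in> B k"
      have k: "k < length \<pi>" using that unfolding I_def by auto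
      have "a k \<le> t" "t < f (\<pi> ! k)" using tk unfolding B_def by auto
      then show False using age[OF _ k, of i] age[OF _ i, of k] tint that
        by (cases "i < k") auto
    qed
    have "(\<Sum>k\<in>I. real (M s) * indicator (B k) t) = (\<Sum>k\<in>I. if k = i then real (M s) else 0)"
      by (rule sum.cong) (auto simp: disj tB)
    also have "\<dots> = real (M s)" using iI finI by simp
    also have "\<dots> \<le> (\<Sum>v\<in>N. indicator (X v) t)"
    proof -
      have busy: "\<forall>j < M s. sched t s j \<noteq> None"
        using ES8[OF inV[OF i]] rel[OF i] tint nex gi by auto
      define g where "g j = the (sched t s j)" for j
      have gS: "sched t s j = Some (g j)" if "j < M s" for j
        using busy that unfolding g_def by auto
      have gV: "g j \<in> V" "\<gamma> (g j) = s" if "j < M s" for j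
        using ES1[OF gS[OF that]] by blast+
      have gX: "t \<in> X (g j)" if "j < M s" for j
        using gS[OF that] unfolding X_def exec_set_def executing_def by blast
      have ginj: "inj_on g {..<M s}"
      proof (rule inj_onI)
        fix j j' assume "j \<in> {..<M s}" "j' \<in> {..<M s}" "g j = g j'"
        then show "j = j'" using gS[of j] gS[of j'] ES2 by auto
      qed
      have gnp: "g j \<notin> set \<pi>" if j: "j < M s" for j
      proof
        assume "g j \<in> set \<pi>"
        then obtain k where k: "k < length \<pi>" and gk: "g j = \<pi> ! k" by (auto simp: in_set_conv_nth)
        have "a k \<le> t" "t < f (\<pi> ! k)" using gX[OF j] Xsub[OF k] gk by auto
        moreover have "k \<noteq> i"
        proof
          assume "k = i"
          then have "executing sched (\<pi> ! i) t" using gS[OF j] gk unfolding executing_def by auto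
          then show False using nex by simp
        qed
        ultimately show False using age[OF _ k, of i] age[OF _ i, of k] tint
          by (cases "i < k") auto
      qed
      have sub: "g ` {..<M s} \<subseteq> N" unfolding N_def using gV gnp by auto
      have "real (M s) = (\<Sum>v\<in>g ` {..<M s}. 1)" using ginj by (simp add: card_image)
      also have "\<dots> = (\<Sum>v\<in>g ` {..<M s}. indicator (X v) t)"
        by (rule sum.cong) (auto simp: gX)
      also have "\<dots> \<le> (\<Sum>v\<in>N. indicator (X v) t)"
        by (rule sum_mono2[OF finN sub]) auto
      finally show ?thesis .
    qed
    finally show ?thesis .
  qed
  have intB: "integrable lborel (indicator (B i) :: real \<Rightarrow> real)" if "i \<in> I" for i
    using that Bmeas Bfin unfolding I_def by auto
  have intX: "integrable lborel (indicator (X v) :: real \<Rightarrow> real)" if "v \<in> N" for v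
    using that Xmeas Xfin unfolding N_def by auto
  have "real (M s) * (\<Sum>i\<in>I. path_y sched f \<pi> i) = (\<Sum>i\<in>I. real (M s) * measure lborel (B i))"
    by (simp add: sum_distrib_left py I_def)
  also have "\<dots> = integral\<^sup>L lborel (\<lambda>t. \<Sum>i\<in>I. real (M s) * indicator (B i) t)"
    by (subst Bochner_Integration.integral_sum) (auto intro: intB)
  also have "\<dots> \<le> integral\<^sup>L lborel (\<lambda>t. \<Sum>v\<in>N. indicator (X v) t)"
    by (rule integral_mono) (auto intro!: intB intX pw)
  also have "\<dots> = (\<Sum>v\<in>N. measure lborel (X v))"
    by (subst Bochner_Integration.integral_sum) (auto intro: intX)
  also have "\<dots> \<le> (\<Sum>v\<in>N. c v)"
    by (rule sum_mono) (use ES6 in \<open>auto simp: N_def X_def\<close>)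
  also have "\<dots> = vol V \<gamma> c s - (\<Sum>j\<in>I. c (\<pi> ! j))"
  proof -
    define Q where "Q = {u \<in> set \<pi>. \<gamma> u = s}"
    have bij: "bij_betw (nth \<pi>) I Q"
      unfolding bij_betw_def Q_def I_def
      using dist by (auto simp: inj_on_nth in_set_conv_nth)
    have "(\<Sum>j\<in>I. c (\<pi> ! j)) = (\<Sum>u\<in>Q. c u)" by (rule sum.reindex_bij_betw[OF bij])
    moreover have "{u\<in>V. \<gamma> u = s} = N \<union> Q" unfolding N_def Q_def
      using inV by (auto simp: in_set_conv_nth)
    moreover have "N \<inter> Q = {}" unfolding N_def Q_def by auto
    moreover have "finite Q" unfolding Q_def by simp
    ultimately show ?thesis unfolding vol_def using finN by (simp add: sum.union_disjoint)
  qed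
  finally have yb: "real (M s) * (\<Sum>i\<in>I. path_y sched f \<pi> i) \<le> vol V \<gamma> c s - (\<Sum>j\<in>I. c (\<pi> ! j))" .
  have "(\<Sum>i\<in>I. path_y sched f \<pi> i) \<le> (vol V \<gamma> c s - (\<Sum>j\<in>I. c (\<pi> ! j))) / real (M s)"
    using yb Msge by (simp add: pos_le_divide_eq mult.commute)
  then show "(\<Sum>i | i < length \<pi> \<and> \<gamma> (\<pi> ! i) = s. path_x sched f \<pi> i)
        \<le> (\<Sum>j | j < length \<pi> \<and> \<gamma> (\<pi> ! j) = s. c (\<pi> ! j)) \<and>
     (\<Sum>i | i < length \<pi> \<and> \<gamma> (\<pi> ! i) = s. path_y sched f \<pi> i)
        \<le> (vol V \<gamma> c s - (\<Sum>j | j < length \<pi> \<and> \<gamma> (\<pi> ! j) = s. c (\<pi> ! j))) / real (M s)"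
    using partx unfolding I_def by simp
qed

end
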